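(* Let $(\varphi_n)_{n\ge0}$ be vectors in $\mathbb{R}^d$, $r_0=1$, $r_n=1+\sum_{i=1}^n\|\varphi_i\|^2$, $A_n=\varphi_n\varphi_n^\top/r_n$, and define $\Phi(i,i)=I$, $\Phi(n+1,i)=(I-A_n)\Phi(n,i)$ for $n\ge i$. Assume $r_n\to\infty$, $r_n=O(r_{n-1})$, and that for some $\alpha<1$ $$\kappa\Big(\sum_{i=1}^n\varphi_i\varphi_i^\top\Big)=O\big((\log r_n)^\alpha\big),$$ i.e. there exist $M>0$ and $n_0$ such that for all $n\ge n_0$ the matrix $\sum_{i=1}^n\varphi_i\varphi_i^\top$ is nonsingular with condition number at most $M(\log r_n)^\alpha$. Then $\Phi(n,0)\to0$ as $n\to\infty$.
   Context: For a nonsingular matrix $A$, $\kappa(A)=\|A\|\,\|A^{-1}\|$ with $\|\cdot\|$ the spectral norm; $\log$ is the natural logarithm; $r_n=O(r_{n-1})$ means $r_n\le Cr_{n-1}$ for some constant $C$ and all $n\ge1$. *)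

theory Defs
  imports "HOL-Analysis.Analysis"
begin

definition spec_norm :: "real^'d^'d \<Rightarrow> real" where
  "spec_norm A = onorm (\<lambda>x. A *v x)"

definition cond_num :: "real^'d^'d \<Rightarrow> real" where
  "cond_num A = spec_norm A * spec_norm (matrix_inv A)"

definition outer :: "real^'d \<Rightarrow> real^'d^'d" where
  "outer v = (\<chi> i j. v $ i * v $ j)"

definition rseq :: "(nat \<Rightarrow> real^'d) \<Rightarrow> nat \<Rightarrow> real" where
  "rseq phi n = 1 + (\<Sum>i=1..n. (norm (phi i))^2)"

definition Amat :: "(nat \<Rightarrow> real^'d) \<Rightarrow> nat \<Rightarrow> real^'d^'d" where
  "Amat phi n = (1 / rseq phi n) *\<^sub>R outer (phi n)"

primrec Phi0 :: "(nat \<Rightarrow> real^'d) \<Rightarrow> nat \<Rightarrow> real^'d^'d" where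
  "Phi0 phi 0 = mat 1"
| "Phi0 phi (Suc n) = (mat 1 - Amat phi n) ** Phi0 phi n"

end

theory Submission
  imports Defs
begin

lemma outer_mulv: "outer v *v y = (v \<bullet> y) *\<^sub>R v"
  by (simp add: vec_eq_iff outer_def matrix_vector_mult_def inner_vec_def sum_distrib_left algebra_simps)

lemma sum_mulv: "finite I \<Longrightarrow> (\<Sum>i\<in>I. (A i::real^'n^'m)) *v y = (\<Sum>i\<in>I. A i *v y)"
  by (induction I rule: finite_induct) (auto simp: matrix_vector_mult_add_rdistrib)

lemma scaleR_mulv: "((c::real) *\<^sub>R (A::real^'n^'m)) *v y = c *\<^sub>R (A *v y)"
  by (simp add: vec_eq_iff matrix_vector_mult_def sum_distrib_left algebra_simps)

lemma inner_sum_outer: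
  assumes "finite I"
  shows "y \<bullet> ((\<Sum>i\<in>I. outer (phi i)) *v z) = (\<Sum>i\<in>I. (phi i \<bullet> y) * (phi i \<bullet> z))"
  using assms by (simp add: sum_mulv outer_mulv inner_sum_right inner_commute mult.commute)

lemma Phi0_step:
  "Phi0 phi (Suc n) *v x = Phi0 phi n *v x - ((phi n \<bullet> (Phi0 phi n *v x)) / rseq phi n) *\<^sub>R phi n"
  by (simp add: matrix_vector_mul_assoc[symmetric] matrix_vector_mult_diff_rdistrib Amat_def
       scaleR_mulv outer_mulv)

lemma rseq_0[simp]: "rseq phi 0 = 1" by (simp add: rseq_def)
lemma rseq_Suc: "rseq phi (Suc n) = rseq phi n + (norm (phi (Suc n)))^2"
  by (simp add: rseq_def)
lemma rseq_ge1: "rseq phi n \<ge> 1"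
  by (simp add: rseq_def sum_nonneg)
lemma rseq_pos: "rseq phi n > 0"
  using rseq_ge1[of phi n] by linarith
lemma rseq_mono: "m \<le> n \<Longrightarrow> rseq phi m \<le> rseq phi n"
  by (induction n rule: dec_induct) (auto simp: rseq_Suc intro: order_trans)
lemma rseq_phi: "n \<ge> 1 \<Longrightarrow> (norm (phi n))^2 + 1 \<le> rseq phi n"
  using rseq_Suc[of phi "n-1"] rseq_ge1[of phi "n-1"] by (cases n) auto
lemma rseq_pred: "n \<ge> 1 \<Longrightarrow> rseq phi n = rseq phi (n-1) + (norm (phi n))^2"
  using rseq_Suc[of phi "n-1"] by (cases n) auto

lemma inv_right: "invertible (S::real^'n^'n) \<Longrightarrow> S ** matrix_inv S = mat 1"
  unfolding invertible_def matrix_inv_def by (rule someI2_ex) auto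

lemma spec_norm_bound: "norm (A *v y) \<le> spec_norm A * norm y"
  unfolding spec_norm_def by (rule onorm) simp

lemma spec_norm_nonneg: "spec_norm A \<ge> 0"
  unfolding spec_norm_def by (rule onorm_pos_le) simp

lemma key_F:
  fixes phi :: "nat \<Rightarrow> real^'d"
  assumes inv: "invertible S" and S: "S = (\<Sum>i=1..n. outer (phi i))" and cn: "cond_num S \<le> K"
  shows "(rseq phi n - 1) * (norm x)^2 \<le> real CARD('d) * K * (\<Sum>i=1..n. (phi i \<bullet> x)^2)"
proof -
  define q where "q y z = (\<Sum>i=1..n. (phi i \<bullet> y) * (phi i \<bullet> z))" for y z
  have qS: "q y z = y \<bullet> (S *v z)" for y z
    unfolding q_def S by (simp add: inner_sum_outer)
  define B where "B = matrix_inv S"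
  have SB: "S ** B = mat 1" unfolding B_def by (rule inv_right[OF inv])
  define nB where "nB = spec_norm B"
  define nS where "nS = spec_norm S"
  have nBb: "norm (B *v y) \<le> nB * norm y" for y unfolding nB_def by (rule spec_norm_bound)
  have nSb: "norm (S *v y) \<le> nS * norm y" for y unfolding nS_def by (rule spec_norm_bound)
  have nB0: "nB \<ge> 0" unfolding nB_def by (rule spec_norm_nonneg)
  have cnd: "nS * nB \<le> K" using cn unfolding cond_num_def nS_def nB_def B_def .
  have qxx0: "q x x \<ge> 0" unfolding q_def by (auto intro!: sum_nonneg)
  have qxx: "q x x = (\<Sum>i=1..n. (phi i \<bullet> x)^2)" unfolding q_def by (simp add: power2_eq_square)
  have xx: "x \<bullet> x = q x (B *v x)"
    by (simp add: qS matrix_vector_mul_assoc SB)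
  have CS: "(q x (B *v x))^2 \<le> q x x * q (B *v x) (B *v x)"
    unfolding q_def using Cauchy_Schwarz_ineq_sum[of "\<lambda>i. phi i \<bullet> x" "\<lambda>i. phi i \<bullet> (B *v x)" "{1..n}"]
    by (simp add: power2_eq_square)
  have qBB: "q (B *v x) (B *v x) \<le> nB * (norm x)^2"
  proof -
    have "q (B *v x) (B *v x) = (B *v x) \<bullet> x"
      by (simp add: qS matrix_vector_mul_assoc SB)
    also have "\<dots> \<le> norm (B *v x) * norm x" by (rule norm_cauchy_schwarz)
    also have "\<dots> \<le> nB * norm x * norm x" by (rule mult_right_mono[OF nBb]) simp
    finally show ?thesis by (simp add: power2_eq_square mult.assoc)
  qed
  have x2: "(norm x)^2 \<le> nB * q x x"
  proof (cases "x = 0")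
    case True then show ?thesis using nB0 qxx0 by simp
  next
    case False
    then have np: "(norm x)^2 > 0" by simp
    have "((norm x)^2)^2 = (q x (B *v x))^2" using xx by (simp add: power2_norm_eq_inner)
    also have "\<dots> \<le> q x x * q (B *v x) (B *v x)" by (rule CS)
    also have "\<dots> \<le> q x x * (nB * (norm x)^2)" by (rule mult_left_mono[OF qBB qxx0])
    finally have "((norm x)^2)^2 \<le> q x x * (nB * (norm x)^2)" .
    then have "(norm x)^2 * (norm x)^2 \<le> (nB * q x x) * (norm x)^2"
      by (simp add: power2_eq_square algebra_simps)
    then show ?thesis using np by (rule mult_right_le_imp_le)
  qed
  have tr: "rseq phi n - 1 \<le> real CARD('d) * nS"
  proof -
    have ax: "phi i \<bullet> axis j 1 = phi i $ j" for i j by (simp add: inner_axis)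
    have nm: "(norm (phi i))^2 = (\<Sum>j\<in>UNIV. phi i $ j * phi i $ j)" for i
      by (simp add: power2_norm_eq_inner inner_vec_def)
    have "rseq phi n - 1 = (\<Sum>i=1..n. (norm (phi i))^2)" by (simp add: rseq_def)
    also have "\<dots> = (\<Sum>i=1..n. \<Sum>j\<in>UNIV. (phi i \<bullet> axis j 1) * (phi i \<bullet> axis j 1))"
      using ax nm by simp
    also have "\<dots> = (\<Sum>j\<in>UNIV. q (axis j 1) (axis j 1))"
      unfolding q_def by (rule sum.swap)
    also have "\<dots> \<le> (\<Sum>j\<in>(UNIV::'d set). nS)"
    proof (rule sum_mono)
      fix j :: 'd
      have "q (axis j 1) (axis j 1) \<le> norm (axis j (1::real)) * norm (S *v axis j 1)"
        unfolding qS by (rule norm_cauchy_schwarz)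
      also have "\<dots> \<le> nS" using nSb[of "axis j 1"] by simp
      finally show "q (axis j 1) (axis j 1) \<le> nS" .
    qed
    finally show ?thesis by simp
  qed
  have "(rseq phi n - 1) * (norm x)^2 \<le> (real CARD('d) * nS) * (nB * q x x)"
    using tr x2 rseq_ge1[of phi n] by (intro mult_mono) auto
  also have "\<dots> = real CARD('d) * (nS * nB) * q x x" by simp
  also have "\<dots> \<le> real CARD('d) * K * q x x"
    using cnd qxx0 by (intro mult_right_mono mult_left_mono) auto
  finally show ?thesis by (simp add: qxx)
qed

definition xs :: "(nat \<Rightarrow> real^'d) \<Rightarrow> real^'d \<Rightarrow> nat \<Rightarrow> real^'d" where
  "xs phi x0 k = Phi0 phi k *v x0"

context
  fixes phi :: "nat \<Rightarrow> real^'d" and x0 :: "real^'d"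
begin

abbreviation "X k \<equiv> xs phi x0 k"
abbreviation "V k \<equiv> (norm (X k))^2"
abbreviation "cc k \<equiv> phi k \<bullet> X k"
abbreviation "rr k \<equiv> rseq phi k"

lemma norm_diff_sq: "(norm (y - t *\<^sub>R v))^2 = (norm y)^2 - 2*t*(v \<bullet> y) + t^2*(norm v)^2"
  for y v :: "real^'d"
  by (simp add: power2_norm_eq_inner inner_diff_left inner_diff_right inner_commute) (simp add: algebra_simps power2_eq_square)

lemma X_step: "X (Suc k) = X k - (cc k / rr k) *\<^sub>R phi k"
  unfolding xs_def by (rule Phi0_step)

lemma energy:
  assumes "1 \<le> k"
  shows "(cc k)^2 / rr k \<le> V k - V (Suc k)"
proof -
  define r where "r = rr k"
  define c where "c = cc k"
  define p where "p = (norm (phi k))^2"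
  have r0: "r > 0" unfolding r_def by (rule rseq_pos)
  have pr: "p \<le> r" using rseq_phi[OF assms, of phi] unfolding p_def r_def by simp
  have p0: "p \<ge> 0" unfolding p_def by simp
  have "V (Suc k) = V k - 2 * (c/r) * c + (c/r)^2 * p"
    unfolding X_step c_def r_def p_def by (rule norm_diff_sq)
  moreover have "(c/r)^2 * p \<le> c^2 / r"
  proof -
    have "(c/r)^2 * p = c^2 * p / r^2" by (simp add: power_divide)
    also have "\<dots> \<le> c^2 * r / r^2" using pr r0 by (intro divide_right_mono mult_left_mono) auto
    also have "\<dots> = c^2 / r" using r0 by (simp add: power2_eq_square)
    finally show ?thesis .
  qed
  moreover have "2 * (c/r) * c = 2 * (c^2 / r)" by (simp add: power2_eq_square)
  ultimately show ?thesis unfolding c_def r_def by linarith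
qed

lemma e_nonneg: "(cc k)^2 / rr k \<ge> 0"
  using rseq_pos[of phi k] by simp

lemma V_dec: "1 \<le> k \<Longrightarrow> V (Suc k) \<le> V k"
  using energy[of k] e_nonneg[of k] by linarith

lemma V_mono: assumes "1 \<le> m" "m \<le> n" shows "V n \<le> V m"
  using assms(2)
proof (induction n rule: dec_induct)
  case (step n) then show ?case using V_dec[of n] assms(1) by linarith
qed simp

lemma energy_sum:
  assumes "1 \<le> m" "m \<le> n"
  shows "(\<Sum>k\<in>{m..n}. (cc k)^2 / rr k) \<le> V m - V (Suc n)"
  using assms(2)
proof (induction n rule: dec_induct)
  case base then show ?case using energy[OF assms(1)] by simp
next
  case (step n)
  have "(\<Sum>k\<in>{m..Suc n}. (cc k)^2 / rr k) = (\<Sum>k\<in>{m..n}. (cc k)^2 / rr k) + (cc (Suc n))^2 / rr (Suc n)"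
    using step.hyps by (simp add: sum.cl_ivl_Suc)
  then show ?case using step.IH energy[of "Suc n"] by simp
qed

lemma X_diff:
  assumes "m \<le> i"
  shows "X m - X i = (\<Sum>j\<in>{m..<i}. (cc j / rr j) *\<^sub>R phi j)"
  using assms
proof (induction i rule: dec_induct)
  case (step i)
  then show ?case by (simp add: X_step)
qed simp

end


lemma sq2: "(u+w)^2 \<le> 2*u^2 + 2*w^2" for u w :: real
  using zero_le_power2[of "u-w"] by (simp add: power2_eq_square algebra_simps)

context
  fixes phi :: "nat \<Rightarrow> real^'d" and x0 :: "real^'d"
begin

abbreviation "Xs k \<equiv> xs phi x0 k"
abbreviation "Vs k \<equiv> (norm (Xs k))^2"
abbreviation "cs k \<equiv> phi k \<bullet> Xs k"
abbreviation "rs k \<equiv> rseq phi k"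

lemma block:
  assumes m1: "1 \<le> m" and mn: "m \<le> n"
  shows "(\<Sum>i\<in>{m..n}. (phi i \<bullet> Xs m)^2 / rs i)
     \<le> 2 * (1 + (\<Sum>j\<in>{m..n}. (norm (phi j))^2 / rs j)^2) * (Vs m - Vs (Suc n))"
proof -
  define D where "D = Vs m - Vs (Suc n)"
  define W where "W = (\<Sum>j\<in>{m..n}. (norm (phi j))^2 / rs j)"
  define e where "e k = (cs k)^2 / rs k" for k
  have rpos: "rs k > 0" for k by (rule rseq_pos)
  have e0: "e k \<ge> 0" for k unfolding e_def using rpos[of k] by simp
  have eD: "sum e {m..n} \<le> D" unfolding e_def D_def by (rule energy_sum[OF m1 mn])
  have D0: "D \<ge> 0" using eD sum_nonneg[of "{m..n}" e, OF e0] by linarith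
  have W0: "W \<ge> 0" unfolding W_def by (intro sum_nonneg divide_nonneg_pos zero_le_power2 rseq_pos)
  have dist: "(norm (Xs m - Xs i))^2 \<le> D * W" if i: "i \<in> {m..n}" for i
  proof -
    define a where "a j = \<bar>cs j\<bar> / sqrt (rs j)" for j
    define b where "b j = norm (phi j) / sqrt (rs j)" for j
    have sq: "sqrt (rs j) * sqrt (rs j) = rs j" for j using rpos[of j] by simp
    have ab: "a j * b j = norm ((cs j / rs j) *\<^sub>R phi j)" for j
      unfolding a_def b_def using rpos[of j] sq[of j] by (simp add: abs_div)
    have a2: "(a j)^2 = e j" for j
      unfolding a_def e_def using rpos[of j] by (simp add: power_divide)
    have b2: "(b j)^2 = (norm (phi j))^2 / rs j" for j
      unfolding b_def using rpos[of j] by (simp add: power_divide)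
    have sub: "{m..<i} \<subseteq> {m..n}" using i by auto
    have "norm (Xs m - Xs i) \<le> (\<Sum>j\<in>{m..<i}. a j * b j)"
      unfolding ab X_diff[of m i phi x0, OF conjunct1[OF i[simplified]]] by (rule norm_sum)
    moreover have "norm (Xs m - Xs i) \<ge> 0" by simp
    ultimately have "(norm (Xs m - Xs i))^2 \<le> (\<Sum>j\<in>{m..<i}. a j * b j)^2"
      by (rule power_mono)
    also have "\<dots> \<le> (\<Sum>j\<in>{m..<i}. (a j)^2) * (\<Sum>j\<in>{m..<i}. (b j)^2)"
      by (rule Cauchy_Schwarz_ineq_sum)
    also have "\<dots> \<le> D * W"
    proof (rule mult_mono)
      have "(\<Sum>j\<in>{m..<i}. (a j)^2) = sum e {m..<i}" by (simp add: a2)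
      also have "\<dots> \<le> sum e {m..n}" by (rule sum_mono2[OF _ sub]) (auto simp: e0)
      finally show "(\<Sum>j\<in>{m..<i}. (a j)^2) \<le> D" using eD by linarith
      have "(\<Sum>j\<in>{m..<i}. (b j)^2) = (\<Sum>j\<in>{m..<i}. (norm (phi j))^2 / rs j)" by (simp add: b2)
      also have "\<dots> \<le> W" unfolding W_def by (rule sum_mono2[OF _ sub]) (auto intro: divide_nonneg_pos rpos)
      finally show "(\<Sum>j\<in>{m..<i}. (b j)^2) \<le> W" .
    qed (auto simp: D0 intro: sum_nonneg)
    finally show ?thesis .
  qed
  have trm: "(phi i \<bullet> Xs m)^2 / rs i \<le> 2 * e i + 2 * ((norm (phi i))^2 / rs i) * (D * W)"
    if i: "i \<in> {m..n}" for i
  proof -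
    have eq: "phi i \<bullet> Xs m = cs i + phi i \<bullet> (Xs m - Xs i)" by (simp add: inner_diff_right)
    have w2: "(phi i \<bullet> (Xs m - Xs i))^2 \<le> (norm (phi i))^2 * (D * W)"
    proof -
      have "(phi i \<bullet> (Xs m - Xs i))^2 \<le> (norm (phi i) * norm (Xs m - Xs i))^2"
        by (metis abs_ge_zero Cauchy_Schwarz_ineq2 power2_abs power_mono)
      also have "\<dots> = (norm (phi i))^2 * (norm (Xs m - Xs i))^2" by (simp add: power_mult_distrib)
      also have "\<dots> \<le> (norm (phi i))^2 * (D * W)" by (rule mult_left_mono[OF dist[OF i]]) simp
      finally show ?thesis .
    qed
    have "(phi i \<bullet> Xs m)^2 \<le> 2 * (cs i)^2 + 2 * (phi i \<bullet> (Xs m - Xs i))^2"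
      unfolding eq by (rule sq2)
    also have "\<dots> \<le> 2 * (cs i)^2 + 2 * ((norm (phi i))^2 * (D * W))" using w2 by simp
    finally have "(phi i \<bullet> Xs m)^2 / rs i \<le> (2 * (cs i)^2 + 2 * ((norm (phi i))^2 * (D * W))) / rs i"
      using rpos[of i] by (simp add: divide_right_mono)
    also have "\<dots> = 2 * e i + 2 * ((norm (phi i))^2 / rs i) * (D * W)"
      unfolding e_def by (simp add: add_divide_distrib)
    finally show ?thesis .
  qed
  have "(\<Sum>i\<in>{m..n}. (phi i \<bullet> Xs m)^2 / rs i) \<le> (\<Sum>i\<in>{m..n}. 2 * e i + 2 * ((norm (phi i))^2 / rs i) * (D * W))"
    by (rule sum_mono) (rule trm)
  also have "\<dots> = (\<Sum>i\<in>{m..n}. 2 * e i) + (\<Sum>i\<in>{m..n}. (2 * (D * W)) * ((norm (phi i))^2 / rs i))"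
    by (simp add: sum.distrib mult_ac)
  also have "\<dots> = 2 * sum e {m..n} + 2 * (D * W) * W"
    unfolding W_def by (simp only: sum_distrib_left)
  also have "\<dots> = 2 * sum e {m..n} + 2 * W * (D * W)" by simp
  also have "\<dots> \<le> 2 * D + 2 * W * (D * W)" using eD by simp
  also have "\<dots> = 2 * (1 + W^2) * D" by (simp add: algebra_simps power2_eq_square)
  finally show ?thesis unfolding D_def W_def .
qed

lemma W_le_ln:
  assumes m1: "1 \<le> m" and mn: "m \<le> n"
  shows "(\<Sum>j\<in>{m..n}. (norm (phi j))^2 / rs j) \<le> ln (rs n) - ln (rs (m - 1))"
  using mn
proof (induction n rule: dec_induct)
  have one: "(norm (phi j))^2 / rs j \<le> ln (rs j) - ln (rs (j - 1))" if "1 \<le> j" for j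
  proof -
    have rp: "rs j > 0" "rs (j-1) > 0" by (auto intro: rseq_pos)
    have eq: "(norm (phi j))^2 / rs j = 1 - rs (j-1) / rs j"
      using rseq_pred[OF that, of phi] rp by (simp add: field_simps)
    have "ln (rs (j-1) / rs j) \<le> rs (j-1) / rs j - 1" by (rule ln_le_minus_one) (use rp in simp)
    then show ?thesis unfolding eq using rp by (simp add: ln_div)
  qed
  {
    case base
    show ?case using one[OF m1] by simp
  next
    case (step n)
    have "(\<Sum>j\<in>{m..Suc n}. (norm (phi j))^2 / rs j) = (\<Sum>j\<in>{m..n}. (norm (phi j))^2 / rs j) + (norm (phi (Suc n)))^2 / rs (Suc n)"
      using step.hyps by (simp add: sum.cl_ivl_Suc)
    then show ?case using step.IH one[of "Suc n"] by simp
  }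
qed

lemma main_step:
  assumes m1: "1 \<le> m" and mn: "m \<le> n" and Kpos: "K > 0"
    and F: "\<And>x. (rs n - 1) * (norm x)^2 \<le> real CARD('d) * K * (\<Sum>i=1..n. (phi i \<bullet> x)^2)"
    and r2: "rs n \<ge> 2"
    and thr: "4 * real CARD('d) * K * rs (m - 1) \<le> rs n"
    and Wl: "ln (rs n) - ln (rs (m - 1)) \<le> l"
  shows "Vs (Suc n) \<le> (1 - 1 / (8 * real CARD('d) * K * (1 + l^2))) * Vs m"
proof -
  define d where "d = real CARD('d)"
  have d1: "d \<ge> 1" unfolding d_def by simp
  define y where "y = Xs m"
  define Slo where "Slo = (\<Sum>i\<in>{1..<m}. (phi i \<bullet> y)^2)"
  define Sb where "Sb = (\<Sum>i\<in>{m..n}. (phi i \<bullet> y)^2)"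
  define W where "W = (\<Sum>j\<in>{m..n}. (norm (phi j))^2 / rs j)"
  have rpos: "rs k > 0" for k by (rule rseq_pos)
  have W0: "W \<ge> 0" unfolding W_def by (intro sum_nonneg divide_nonneg_pos zero_le_power2 rseq_pos)
  have Wl': "W \<le> l" using W_le_ln[OF m1 mn] Wl unfolding W_def by linarith
  have W2: "W^2 \<le> l^2" using W0 Wl' by (intro power_mono) auto
  have split: "(\<Sum>i=1..n. (phi i \<bullet> y)^2) = Slo + Sb"
  proof -
    have "{1..n} = {1..<m} \<union> {m..n}" using m1 mn by auto
    then show ?thesis unfolding Slo_def Sb_def by (simp only:) (rule sum.union_disjoint; auto)
  qed
  have Slo_le: "Slo \<le> rs (m - 1) * Vs m"
  proof -
    have "Slo \<le> (\<Sum>i\<in>{1..<m}. (norm (phi i))^2 * (norm y)^2)"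
      unfolding Slo_def
    proof (rule sum_mono)
      fix i
      show "(phi i \<bullet> y)^2 \<le> (norm (phi i))^2 * (norm y)^2"
        by (metis abs_ge_zero Cauchy_Schwarz_ineq2 power2_abs power_mono power_mult_distrib)
    qed
    also have "\<dots> = (rs (m - 1) - 1) * (norm y)^2"
    proof -
      have "{1..<m} = {1..m-1}" using m1 by auto
      then show ?thesis by (simp add: rseq_def sum_distrib_right)
    qed
    also have "\<dots> \<le> rs (m - 1) * Vs m" unfolding y_def by (simp add: mult_right_mono)
    finally show ?thesis .
  qed
  have Sb_le: "Sb / rs n \<le> (\<Sum>i\<in>{m..n}. (phi i \<bullet> y)^2 / rs i)"
    unfolding Sb_def sum_divide_distrib
  proof (rule sum_mono)
    fix i assume i: "i \<in> {m..n}"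
    have "rs i \<le> rs n" using i by (auto intro: rseq_mono)
    then show "(phi i \<bullet> y)^2 / rs n \<le> (phi i \<bullet> y)^2 / rs i"
      using rpos[of i] by (intro divide_left_mono) auto
  qed
  have blk: "(\<Sum>i\<in>{m..n}. (phi i \<bullet> y)^2 / rs i) \<le> 2 * (1 + W^2) * (Vs m - Vs (Suc n))"
    unfolding y_def W_def by (rule block[OF m1 mn])
  have Vd: "Vs (Suc n) \<le> Vs m" using V_mono[of m "Suc n" phi x0] m1 mn by simp
  have blk2: "Sb / rs n \<le> 2 * (1 + l^2) * (Vs m - Vs (Suc n))"
    using Sb_le blk W2 Vd by (smt (verit) mult_right_mono mult_left_mono)
  have Fy: "(rs n - 1) * Vs m \<le> d * K * (Slo + Sb)" using F[of y] split unfolding y_def d_def by simp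
  have "rs n * Vs m / 4 \<le> d * K * Sb"
  proof -
    have "rs n / 2 * Vs m \<le> (rs n - 1) * Vs m" using r2 by (intro mult_right_mono) auto
    moreover have "d * K * Slo \<le> rs n / 4 * Vs m"
    proof -
      have "d * K * Slo \<le> d * K * (rs (m - 1) * Vs m)" using Slo_le d1 Kpos by (intro mult_left_mono) auto
      also have "\<dots> = (4 * d * K * rs (m - 1)) * Vs m / 4" by simp
      also have "\<dots> \<le> rs n * Vs m / 4" using thr unfolding d_def by (intro divide_right_mono mult_right_mono) auto
      finally show ?thesis by simp
    qed
    ultimately show ?thesis using Fy by (simp add: algebra_simps)
  qed
  then have "Vs m / (4 * d * K) \<le> Sb / rs n"
    using rpos[of n] d1 Kpos by (simp add: field_simps)
  then have "Vs m / (4 * d * K) \<le> 2 * (1 + l^2) * (Vs m - Vs (Suc n))" using blk2 by linarith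
  then have "Vs m \<le> (8 * d * K * (1 + l^2)) * (Vs m - Vs (Suc n))"
    using d1 Kpos by (simp add: field_simps)
  moreover have P0: "8 * d * K * (1 + l^2) > 0" using d1 Kpos by (simp add: add_pos_nonneg)
  ultimately show ?thesis unfolding d_def[symmetric] by (simp add: field_simps)
qed

end

lemma ge1_mult: "1 \<le> x \<Longrightarrow> 1 \<le> y \<Longrightarrow> 1 \<le> x * (y::real)"
  using mult_mono[of 1 x 1 y] by simp

lemma asym_c:
  fixes a M C d u :: real
  assumes a0: "0 < a" and a1: "a < 1" and M1: "M \<ge> 1" and C1: "C \<ge> 1" and d1: "d \<ge> 1"
    and u1: "u \<ge> 1"
    and ubig: "u \<ge> (2 * (4*d*C*M) * (ln C + (4*d*C*M) powr ((1-a)/(6*a)) / ((1-a)/(6*a)) + 1)^3) powr (2/(1-a))"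
  shows "ln C + ln (4*d*(M * u powr a)) \<le> (ln C + u) / (8*d*(M * u powr a) * (1 + (ln (4*d*C*(M * u powr a)))^2))"
proof -
  define P where "P = 4*d*C*M"
  define e where "e = (1-a)/(6*a)"
  define G where "G = P powr e / e"
  define H where "H = ln C + G + 1"
  define K where "K = M * u powr a"
  define l where "l = ln (4*d*C*K)"
  have e0: "e > 0" unfolding e_def using a0 a1 by simp
  have P1: "P \<ge> 1" unfolding P_def using d1 C1 M1 by (intro ge1_mult) auto
  have lnC: "ln C \<ge> 0" using C1 by simp
  have G0: "G \<ge> 0" unfolding G_def using e0 by simp
  have H1: "H \<ge> 1" unfolding H_def using lnC G0 by simp
  have ua: "u powr a \<ge> 1" using u1 a0 by (simp add: ge_one_powr_ge_zero)
  have K1: "K \<ge> 1" unfolding K_def using M1 ua by (intro ge1_mult)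
  have PK: "4*d*C*K = P * u powr a" unfolding P_def K_def by simp
  have PK1: "P * u powr a \<ge> 1" using P1 ua by (intro ge1_mult)
  have l0: "l \<ge> 0" unfolding l_def PK using PK1 by simp
  define v where "v = u powr (a*e)"
  have v1: "v \<ge> 1" unfolding v_def using u1 a0 e0 by (simp add: ge_one_powr_ge_zero)
  have lG: "l \<le> G * v"
  proof -
    have "l \<le> (P * u powr a) powr e / e" unfolding l_def PK by (rule ln_powr_bound[OF PK1 e0])
    also have "(P * u powr a) powr e = P powr e * v"
      unfolding v_def using P1 u1 by (simp add: powr_mult powr_powr)
    finally show ?thesis unfolding G_def by (simp add: field_simps)
  qed
  have l4: "ln (4*d*K) \<le> l"
  proof -
    have le: "4*d*K \<le> 4*d*C*K" using C1 d1 K1 by simp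
    have p: "4*d*K > 0" using d1 K1 by simp
    then have p2: "4*d*C*K > 0" using le by linarith
    show ?thesis unfolding l_def using ln_le_cancel_iff[OF p p2] le by blast
  qed
  have A1: "ln C + l \<le> H * v"
  proof -
    have "ln C \<le> ln C * v" using lnC v1 by (simp add: mult_le_cancel_left1)
    moreover have "v \<le> 1 * v" by simp
    ultimately show ?thesis unfolding H_def using lG v1 by (simp add: algebra_simps)
  qed
  have A2: "1 + l^2 \<le> H^2 * v^2"
  proof -
    have "l^2 \<le> (G * v)^2" using l0 lG by (intro power_mono) auto
    moreover have "1 \<le> v^2" using v1 by simp
    moreover have "(1+G)^2 \<le> H^2" unfolding H_def using lnC G0 by (intro power_mono) auto
    ultimately have h1: "1 + l^2 \<le> v^2 + G^2 * v^2" by (simp add: power_mult_distrib)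
    have h2: "v^2 + G^2 * v^2 = (1 + G^2) * v^2" by (simp add: algebra_simps)
    have "1 + G^2 \<le> (1+G)^2" using G0 by (simp add: power2_eq_square algebra_simps)
    then have "(1 + G^2) * v^2 \<le> H^2 * v^2" using \<open>(1+G)^2 \<le> H^2\<close> by (intro mult_right_mono) auto
    with h1 h2 have "1 + l^2 \<le> H^2 * v^2" by linarith
    then show ?thesis .
  qed
  have A3: "8*d*K \<le> 2 * P * u powr a"
  proof -
    have c: "K \<le> C * K" using mult_right_mono[OF C1, of K] K1 by simp
    have "8*d*K \<le> 8*d*(C*K)" using c d1 by (intro mult_left_mono) auto
    also have "8*d*(C*K) = 2 * P * u powr a" by (simp add: P_def K_def)
    finally show ?thesis .
  qed
  define Den where "Den = 8*d*K*(1 + l^2)"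
  have Den0: "Den > 0" unfolding Den_def using d1 K1 by (simp add: add_pos_nonneg)
  have key: "(ln C + l) * Den \<le> u"
  proof -
    have "(ln C + l) * Den \<le> (H * v) * (2 * P * u powr a * (H^2 * v^2))"
    proof -
      have pp: "0 \<le> 2 * P * u powr a" using P1 by simp
      have h2: "8*d*K*(1 + l^2) \<le> 2 * P * u powr a * (H^2 * v^2)"
        by (rule mult_mono[OF A3 A2 pp]) simp
      show ?thesis unfolding Den_def
        by (rule mult_mono[OF A1 h2]) (use H1 v1 Den0 in \<open>auto simp: Den_def\<close>)
    qed
    also have "\<dots> = (2 * P * H^3) * (u powr a * v^3)" by (simp add: power2_eq_square power3_eq_cube)
    also have "u powr a * v^3 = u powr ((1+a)/2)"
    proof -
      have "v^3 = u powr (3*(a*e))" unfolding v_def using u1 by (simp add: powr_realpow[symmetric] powr_powr mult.commute)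
      then have "u powr a * v^3 = u powr (a + 3*(a*e))" by (simp add: powr_add)
      also have "a + 3*(a*e) = (1+a)/2" unfolding e_def using a0 by (simp add: field_simps)
      finally show ?thesis .
    qed
    also have "(2 * P * H^3) * u powr ((1+a)/2) \<le> u powr ((1-a)/2) * u powr ((1+a)/2)"
    proof (rule mult_right_mono)
      have "2 * P * H^3 = ((2 * P * H^3) powr (2/(1-a))) powr ((1-a)/2)"
      proof -
        have ex: "2/(1-a) * ((1-a)/2) = 1" using a1 by simp
        have pos: "2 * P * H^3 > 0" using P1 H1 by simp
        show ?thesis unfolding powr_powr ex using pos by simp
      qed
      also have "\<dots> \<le> u powr ((1-a)/2)"
        using ubig a1 unfolding P_def[symmetric] e_def[symmetric] G_def[symmetric] H_def[symmetric]
        by (intro powr_mono2) auto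
      finally show "2 * P * H^3 \<le> u powr ((1-a)/2)" .
    qed simp
    also have "\<dots> = u"
    proof -
      have "(1 - a) / 2 + (1 + a) / 2 = 1" by (simp add: field_simps)
      then show ?thesis using u1 by (simp add: powr_add[symmetric])
    qed
    finally show ?thesis .
  qed
  have "ln C + ln (4*d*K) \<le> ln C + l" using l4 by simp
  also have "\<dots> \<le> u / Den" using key Den0 by (simp add: field_simps)
  also have "\<dots> \<le> (ln C + u) / Den" using lnC Den0 by (intro divide_right_mono) auto
  finally show ?thesis unfolding Den_def l_def K_def .
qed

lemma asym_b:
  fixes a M d u B0 :: real
  assumes a0: "0 < a" and a1: "a \<le> 1" and M1: "M \<ge> 1" and d1: "d \<ge> 1" and u1: "u \<ge> 1"
    and ub: "u \<ge> 16*d*M*B0"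
  shows "B0 \<le> exp u / (4*d*(M * u powr a))"
proof -
  have ua: "u powr a \<le> u" using powr_mono[OF a1 u1] u1 by simp
  have ua1: "u powr a \<ge> 1" using u1 a0 by (simp add: ge_one_powr_ge_zero)
  have e2: "exp (u/2) \<ge> u/2" using exp_ge_add_one_self[of "u/2"] by linarith
  have "exp u = exp (u/2) * exp (u/2)" by (simp flip: exp_add)
  also have "\<dots> \<ge> (u/2) * (u/2)" using e2 u1 by (intro mult_mono) auto
  finally have eu: "exp u \<ge> u * u / 4" by simp
  have D0: "4*d*(M * u powr a) > 0" using d1 M1 ua1 by (intro mult_pos_pos) auto
  have D1: "4*d*(M * u powr a) \<le> 4*d*M*u" using ua d1 M1 by (simp add: mult_left_mono)
  have "B0 \<le> u / (16*d*M)" using ub d1 M1 by (simp add: field_simps)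
  also have "\<dots> = (u * u / 4) / (4*d*M*u)" using u1 by (simp add: field_simps)
  also have "\<dots> \<le> exp u / (4*d*M*u)" using eu d1 M1 u1 by (intro divide_right_mono) auto
  also have "\<dots> \<le> exp u / (4*d*(M * u powr a))"
  proof -
    have D2: "4*d*M*u > 0" using d1 M1 u1 by (intro mult_pos_pos) auto
    show ?thesis by (rule divide_left_mono[OF D1 _ mult_pos_pos[OF D2 D0]]) simp
  qed
  finally show ?thesis .
qed

lemma asym_all:
  fixes a M C d B0 :: real
  assumes a0: "0 < a" and a1: "a < 1" and M1: "M \<ge> 1" and C1: "C \<ge> 1" and d1: "d \<ge> 1"
  shows "\<forall>\<^sub>F u in at_top. 1 \<le> u \<and> B0 \<le> exp u / (4*d*(M * u powr a)) \<and>
     ln C + ln (4*d*(M * u powr a)) \<le> (ln C + u) / (8*d*(M * u powr a) * (1 + (ln (4*d*C*(M * u powr a)))^2))"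
proof -
  define N where "N = max 1 (max (16*d*M*B0) ((2 * (4*d*C*M) * (ln C + (4*d*C*M) powr ((1-a)/(6*a)) / ((1-a)/(6*a)) + 1)^3) powr (2/(1-a))))"
  show ?thesis unfolding eventually_at_top_linorder
  proof (intro exI[of _ N] allI impI conjI)
    fix u assume u: "u \<ge> N"
    then show u1: "1 \<le> u" unfolding N_def by simp
    show "B0 \<le> exp u / (4*d*(M * u powr a))"
      by (rule asym_b) (use a0 a1 M1 d1 u1 u in \<open>auto simp: N_def\<close>)
    show "ln C + ln (4*d*(M * u powr a)) \<le> (ln C + u) / (8*d*(M * u powr a) * (1 + (ln (4*d*C*(M * u powr a)))^2))"
      by (rule asym_c) (use a0 a1 M1 d1 C1 u1 u in \<open>auto simp: N_def\<close>)
  qed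
qed


lemma ln_mult_pos: "0 < x \<Longrightarrow> 0 < y \<Longrightarrow> ln (x * y) = ln x + ln (y::real)"
  by (simp add: ln_mult)

lemma vec_conv:
  fixes phi :: "nat \<Rightarrow> real^'d" and x0 :: "real^'d"
  assumes C1: "C \<ge> 1" and hC: "\<And>n. n \<ge> 1 \<Longrightarrow> rseq phi n \<le> C * rseq phi (n-1)"
    and a0: "0 < a" and a1: "a < 1" and M1: "M \<ge> 1"
    and ulim: "filterlim (\<lambda>n. ln (rseq phi n)) at_top sequentially"
    and F: "\<And>n x. n \<ge> n0 \<Longrightarrow> ln (rseq phi n) \<ge> 1 \<Longrightarrow>
        (rseq phi n - 1) * (norm x)^2 \<le> real CARD('d) * (M * ln (rseq phi n) powr a) * (\<Sum>i=1..n. (phi i \<bullet> x)^2)"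
  shows "(\<lambda>n. xs phi x0 n) \<longlonglongrightarrow> 0"
proof -
  define d where "d = real CARD('d)"
  have d1: "d \<ge> 1" unfolding d_def by simp
  define r where "r k = rseq phi k" for k
  define u where "u k = ln (r k)" for k
  define K where "K k = M * u k powr a" for k
  define V where "V k = (norm (xs phi x0 k))^2" for k
  define Q where "Q k = V k * u k" for k
  have rpos: "r k > 0" for k unfolding r_def by (rule rseq_pos)
  have r1: "r k \<ge> 1" for k unfolding r_def by (rule rseq_ge1)
  have rexp: "r k = exp (u k)" for k unfolding u_def using rpos[of k] by simp
  have u0: "u k \<ge> 0" for k unfolding u_def using r1[of k] by simp
  have V0: "V k \<ge> 0" for k unfolding V_def by simp
  have ulim': "filterlim u at_top sequentially" using ulim unfolding u_def r_def .
  have evP: "\<forall>\<^sub>F n in sequentially. 1 \<le> u n \<and> 1 \<le> exp (u n) / (4*d*(M * u n powr a)) \<and>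
     ln C + ln (4*d*(M * u n powr a)) \<le> (ln C + u n) / (8*d*(M * u n powr a) * (1 + (ln (4*d*C*(M * u n powr a)))^2))"
    using ulim'[unfolded filterlim_iff, rule_format, OF asym_all[OF a0 a1 M1 C1 d1, of 1]] .
  then obtain N where hN: "\<And>n. n \<ge> N \<Longrightarrow> 1 \<le> u n \<and> 1 \<le> exp (u n) / (4*d*K n) \<and>
     ln C + ln (4*d*K n) \<le> (ln C + u n) / (8*d*K n * (1 + (ln (4*d*C*K n))^2))"
    unfolding eventually_sequentially K_def by blast
  define N2 where "N2 = max N n0"
  have step: "\<exists>m. 1 \<le> m \<and> m \<le> n \<and> Q (Suc n) \<le> Q m" if n: "n \<ge> N2" for n
  proof -
    have u1: "1 \<le> u n" and T1': "1 \<le> exp (u n) / (4*d*K n)"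
      and asy: "ln C + ln (4*d*K n) \<le> (ln C + u n) / (8*d*K n * (1 + (ln (4*d*C*K n))^2))"
      using hN[of n] n unfolding N2_def by auto
    have ua: "u n powr a \<ge> 1" using u1 a0 by (simp add: ge_one_powr_ge_zero)
    have K1: "K n \<ge> 1" unfolding K_def using M1 ua by (intro ge1_mult)
    have dK: "4*d*K n > 0" using d1 K1 by simp
    define T where "T = r n / (4*d*K n)"
    have T1: "1 \<le> T" using T1' unfolding T_def rexp .
    have Tlt: "T < r n"
    proof -
      have "d * K n \<ge> 1" by (rule ge1_mult[OF d1 K1])
      then have "4*d*K n > 1" by linarith
      then show ?thesis unfolding T_def using rpos[of n] by (simp add: divide_less_eq)
    qed
    define m where "m = (LEAST m. T < r m)"
    have mT: "T < r m" unfolding m_def by (rule LeastI[of _ n]) (rule Tlt)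
    have mle: "m \<le> n" unfolding m_def by (rule Least_le) (rule Tlt)
    have m1: "1 \<le> m"
    proof (rule ccontr)
      assume "\<not> 1 \<le> m" then have "m = 0" by simp
      with mT T1 show False by (simp add: r_def)
    qed
    have pre: "r (m-1) \<le> T"
    proof -
      have "\<not> T < r (m-1)" unfolding m_def by (rule not_less_Least) (use m1 m_def in simp)
      then show ?thesis by simp
    qed
    have F': "(rseq phi n - 1) * (norm x)^2 \<le> real CARD('d) * K n * (\<Sum>i=1..n. (phi i \<bullet> x)^2)" for x
      using F[of n x] n u1 unfolding N2_def K_def u_def r_def by simp
    have r2: "rseq phi n \<ge> 2"
    proof -
      have e1: "exp 1 \<le> exp (u n)" using u1 by simp
      have e2: "2 \<le> exp (1::real)" using exp_ge_add_one_self[of 1] by simp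
      have "2 \<le> exp (u n)" using order_trans[OF e2 e1] .
      then show ?thesis using rexp[of n] unfolding r_def by simp
    qed
    have thr: "4 * real CARD('d) * K n * rseq phi (m - 1) \<le> rseq phi n"
      using pre dK unfolding T_def r_def d_def by (simp add: field_simps)
    define l where "l = ln (4*d*C*K n)"
    have dCK: "4*d*C*K n > 0" using dK C1 by simp
    have Wl: "ln (rseq phi n) - ln (rseq phi (m - 1)) \<le> l"
    proof -
      have "r m \<le> C * r (m-1)" using hC[OF m1] unfolding r_def .
      with mT have "r n / (4*d*K n) < C * r (m-1)" unfolding T_def by simp
      then have "r n < (4*d*C*K n) * r (m-1)" using dK by (simp add: field_simps)
      then have lt: "r n < (4*d*C*K n) * r (m-1)" .
      have Yp: "0 < (4*d*C*K n) * r (m-1)" using lt rpos[of n] by linarith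
      have "ln (r n) < ln ((4*d*C*K n) * r (m-1))" using ln_less_cancel_iff[OF rpos[of n] Yp] lt by blast
      also have "\<dots> = l + ln (r (m-1))" unfolding l_def by (rule ln_mult_pos[OF dCK rpos])
      finally show ?thesis unfolding r_def by simp
    qed
    have ms: "V (Suc n) \<le> (1 - 1 / (8 * d * K n * (1 + l^2))) * V m"
      using main_step[OF m1 mle _ F' r2 thr Wl] K1 unfolding V_def d_def by simp
    define rho where "rho = 1 / (8 * d * K n * (1 + l^2))"
    have den1: "8 * d * K n * (1 + l^2) \<ge> 1"
    proof -
      have "d * K n \<ge> 1" by (rule ge1_mult[OF d1 K1])
      then have "8 * d * K n \<ge> 1" by linarith
      moreover have "1 + l^2 \<ge> 1" by simp
      ultimately show ?thesis by (rule ge1_mult)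
    qed
    have rho0: "rho > 0" "rho \<le> 1" unfolding rho_def using den1 by auto
    have asy': "ln C + ln (4*d*K n) \<le> (ln C + u n) * rho"
      using asy unfolding rho_def l_def by simp
    have hu: "u (Suc n) \<le> ln C + u n"
    proof -
      have "r (Suc n) \<le> C * r n" using hC[of "Suc n"] unfolding r_def by simp
      then have "ln (r (Suc n)) \<le> ln (C * r n)" using rpos[of "Suc n"] by simp
      also have "\<dots> = ln C + u n" unfolding u_def using C1 by (intro ln_mult_pos rpos) auto
      finally show ?thesis unfolding u_def .
    qed
    have um: "u n - ln (4*d*K n) < u m"
    proof -
      have "ln T < ln (r m)" using mT T1 by simp
      moreover have "ln T = u n - ln (4*d*K n)" unfolding T_def u_def using rpos[of n] dK d1 K1 by (simp add: ln_div)
      ultimately show ?thesis unfolding u_def by simp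
    qed
    have key: "(1 - rho) * u (Suc n) \<le> u m"
    proof -
      have "(1 - rho) * u (Suc n) \<le> (1 - rho) * (ln C + u n)" using hu rho0 by (intro mult_left_mono) auto
      also have "\<dots> = (ln C + u n) - (ln C + u n) * rho" by (simp add: algebra_simps)
      also have "\<dots> \<le> u n - ln (4*d*K n)" using asy' by simp
      finally show ?thesis using um by simp
    qed
    have "Q (Suc n) \<le> ((1 - rho) * V m) * u (Suc n)"
      unfolding Q_def using ms u0 unfolding rho_def by (intro mult_right_mono) auto
    also have "\<dots> = V m * ((1 - rho) * u (Suc n))" by simp
    also have "\<dots> \<le> V m * u m" using key V0 by (intro mult_left_mono) auto
    finally show ?thesis using m1 mle unfolding Q_def by blast
  qed
  define B where "B = Max (Q ` {1..N2})"
  have bound: "Q n \<le> B" if "n \<ge> 1" for n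
    using that
  proof (induction n rule: less_induct)
    case (less n)
    show ?case
    proof (cases "n \<le> N2")
      case True then show ?thesis unfolding B_def using less.prems by (intro Max_ge) auto
    next
      case False
      then obtain n' where nn: "n = Suc n'" and n': "n' \<ge> N2" by (cases n) auto
      from step[OF n'] obtain m where m: "1 \<le> m" "m \<le> n'" "Q (Suc n') \<le> Q m" by blast
      have "Q m \<le> B" using less.IH[of m] m nn by simp
      then show ?thesis using m nn by simp
    qed
  qed
  have evu: "\<forall>\<^sub>F n in sequentially. u n > 0"
    using ulim'[unfolded filterlim_iff, rule_format, OF eventually_gt_at_top[of 0]] .
  have evV: "\<forall>\<^sub>F n in sequentially. V n \<le> B / u n"
    using evu eventually_ge_at_top[of 1]
  proof eventually_elim
    case (elim n)
    then show ?case using bound[of n] unfolding Q_def by (simp add: pos_le_divide_eq)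
  qed
  have lim0: "(\<lambda>n. B / u n) \<longlonglongrightarrow> 0"
    by (rule tendsto_divide_0[OF tendsto_const filterlim_at_top_imp_at_infinity[OF ulim']])
  have "V \<longlonglongrightarrow> 0"
    by (rule tendsto_sandwich[OF _ evV tendsto_const lim0]) (simp add: V0)
  then have "(\<lambda>n. sqrt (V n)) \<longlonglongrightarrow> sqrt 0" by (rule tendsto_real_sqrt)
  then have "(\<lambda>n. norm (xs phi x0 n)) \<longlonglongrightarrow> 0" unfolding V_def by simp
  then show ?thesis by (simp add: tendsto_norm_zero_iff)
qed


lemma entry: "Phi0 phi n $ i $ j = xs phi (axis j 1) n $ i"
  unfolding xs_def by (simp add: matrix_vector_mult_def axis_def mult.commute[of _ "if _ then _ else _"] if_distrib cong: if_cong)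

theorem mainTheorem5:
  fixes phi :: "nat \<Rightarrow> real^'d"
  assumes r_inf: "filterlim (rseq phi) at_top sequentially"
    and r_O: "\<exists>C. \<forall>n\<ge>1. rseq phi n \<le> C * rseq phi (n - 1)"
    and cond: "\<exists>\<alpha>::real. \<alpha> < 1 \<and> (\<exists>M>0. \<exists>n0. \<forall>n\<ge>n0.
         invertible (\<Sum>i=1..n. outer (phi i)) \<and>
         cond_num (\<Sum>i=1..n. outer (phi i)) \<le> M * (ln (rseq phi n)) powr \<alpha>)"
  shows "(\<lambda>n. Phi0 phi n) \<longlonglongrightarrow> 0"
proof -
  obtain C0 where C0: "\<And>n. n \<ge> 1 \<Longrightarrow> rseq phi n \<le> C0 * rseq phi (n - 1)" using r_O by blast
  define C where "C = max C0 1"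
  have C1: "C \<ge> 1" unfolding C_def by simp
  have hC: "rseq phi n \<le> C * rseq phi (n - 1)" if "n \<ge> 1" for n
  proof -
    have "C0 * rseq phi (n - 1) \<le> C * rseq phi (n - 1)"
      unfolding C_def using rseq_pos[of phi "n-1"] by (intro mult_right_mono) auto
    then show ?thesis using C0[OF that] by linarith
  qed
  obtain \<alpha> M n0 where al: "\<alpha> < 1" and M0: "M > 0" and hc: "\<And>n. n \<ge> n0 \<Longrightarrow>
         invertible (\<Sum>i=1..n. outer (phi i)) \<and>
         cond_num (\<Sum>i=1..n. outer (phi i)) \<le> M * (ln (rseq phi n)) powr \<alpha>"
    using cond by blast
  define a where "a = max \<alpha> (1/2)"
  define M' where "M' = max M 1"
  have a0: "0 < a" and a1: "a < 1" unfolding a_def using al by auto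
  have M1: "M' \<ge> 1" unfolding M'_def by simp
  have ulim: "filterlim (\<lambda>n. ln (rseq phi n)) at_top sequentially"
    by (rule filterlim_compose[OF ln_at_top r_inf])
  have F: "(rseq phi n - 1) * (norm x)^2 \<le> real CARD('d) * (M' * ln (rseq phi n) powr a) * (\<Sum>i=1..n. (phi i \<bullet> x)^2)"
    if n: "n \<ge> n0" and u1: "ln (rseq phi n) \<ge> 1" for n x
  proof -
    have "(rseq phi n - 1) * (norm x)^2 \<le> real CARD('d) * (M * ln (rseq phi n) powr \<alpha>) * (\<Sum>i=1..n. (phi i \<bullet> x)^2)"
      using hc[OF n] by (intro key_F) auto
    also have "\<dots> \<le> real CARD('d) * (M' * ln (rseq phi n) powr a) * (\<Sum>i=1..n. (phi i \<bullet> x)^2)"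
    proof -
      have "ln (rseq phi n) powr \<alpha> \<le> ln (rseq phi n) powr a"
        unfolding a_def by (rule powr_mono[OF _ u1]) simp
      moreover have "M \<le> M'" unfolding M'_def by simp
      ultimately have "M * ln (rseq phi n) powr \<alpha> \<le> M' * ln (rseq phi n) powr a"
        using M0 by (intro mult_mono) auto
      then show ?thesis by (intro mult_right_mono mult_left_mono sum_nonneg) auto
    qed
    finally show ?thesis .
  qed
  have vc: "(\<lambda>n. xs phi v n) \<longlonglongrightarrow> 0" for v
    by (rule vec_conv[OF C1 hC a0 a1 M1 ulim F])
  show ?thesis
  proof (rule vec_tendstoI)
    fix i
    show "(\<lambda>n. Phi0 phi n $ i) \<longlonglongrightarrow> 0 $ i"
    proof (rule vec_tendstoI)
      fix j
      have "(\<lambda>n. xs phi (axis j 1) n $ i) \<longlonglongrightarrow> 0 $ i" by (rule tendsto_vec_nth[OF vc])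
      then show "(\<lambda>n. Phi0 phi n $ i $ j) \<longlonglongrightarrow> 0 $ i $ j" by (simp add: entry)
    qed
  qed
qed


end
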